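(* Let $X_1,\dots,X_n$ be i.i.d. with c.d.f. $F$, mean $\mu$ and finite standard deviation $\sigma$. Let $k\in\mathbb{N}$ with $k<n/2$, and let $v>0$ be such that \[\frac e6\,\rho_{F,2}\left(\frac{1}{36v^2}\frac kn\right)\leq v.\] Then \[\Pr\left(\Delta_{n,k}>12v\,\sigma\sqrt{\frac nk}\right)\leq e^{-k}.\]
   Context: With order statistics $X_{(1)}\le\dots\le X_{(n)}$, $\Delta_{n,k}:=X_{(n-k+1)}-X_{(k)}$. For $\xi>0$, $\rho_{F,2}(\xi):=\sup\{(\mathbb{E}[|X_1-\mu|^2Z])^{1/2}/\sigma: 0\le Z\le1 \text{ a random variable (jointly defined with } X_1), \mathbb{E}Z\le\xi\}$ if $\sigma>0$, and $0$ if $\sigma=0$. *)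

theory Defs
  imports "HOL-Probability.Probability"
begin

definition dist_mean :: "real measure \<Rightarrow> real" where
  "dist_mean F = (\<integral>x. x \<partial>F)"

definition dist_sd :: "real measure \<Rightarrow> real" where
  "dist_sd F = sqrt (\<integral>x. (x - dist_mean F)\<^sup>2 \<partial>F)"

text \<open>rho_{F,2}(xi): supremum over all joint laws N of a pair (X_1, Z) with
  X_1 ~ F, 0 <= Z <= 1 and E Z <= xi, of sqrt(E[|X_1 - mu|^2 Z]) / sigma;
  it is 0 if sigma = 0.\<close>
definition rho2 :: "real measure \<Rightarrow> real \<Rightarrow> real" where
  "rho2 F \<xi> = (if dist_sd F = 0 then 0 else
     Sup { sqrt (\<integral>p. \<bar>fst p - dist_mean F\<bar>\<^sup>2 * snd p \<partial>N) / dist_sd F | N.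
             prob_space N \<and> sets N = sets (borel :: (real \<times> real) measure) \<and>
             distr N borel fst = F \<and>
             (AE p in N. 0 \<le> snd p \<and> snd p \<le> 1) \<and>
             (\<integral>p. snd p \<partial>N) \<le> \<xi> })"

text \<open>Order statistics: X_(j) (1-based) of the sample [X 0 w, ..., X (n-1) w].\<close>
definition order_stat :: "(nat \<Rightarrow> 'a \<Rightarrow> real) \<Rightarrow> nat \<Rightarrow> nat \<Rightarrow> 'a \<Rightarrow> real" where
  "order_stat X n j \<omega> = sort (map (\<lambda>i. X i \<omega>) [0..<n]) ! (j - 1)"

definition Delta :: "(nat \<Rightarrow> 'a \<Rightarrow> real) \<Rightarrow> nat \<Rightarrow> nat \<Rightarrow> 'a \<Rightarrow> real" where
  "Delta X n k \<omega> = order_stat X n (n - k + 1) \<omega> - order_stat X n k \<omega>"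

end

theory Submission
  imports Defs
begin

lemma pow_div_fact_le_exp: "real k ^ k / fact k \<le> exp (real k)"
proof -
  have "(\<lambda>m. real k ^ m /\<^sub>R fact m) sums exp (real k)" by (rule exp_converges)
  then have s: "summable (\<lambda>m. real k ^ m /\<^sub>R fact m)" and e: "exp (real k) = (\<Sum>m. real k ^ m /\<^sub>R fact m)"
    by (auto simp: sums_iff)
  have "sum (\<lambda>m. real k ^ m /\<^sub>R fact m) {k} \<le> (\<Sum>m. real k ^ m /\<^sub>R fact m)"
    by (rule sum_le_suminf[OF s]) auto
  then show ?thesis using e by (simp add: divide_inverse mult.commute)
qed

lemma many_far:
  fixes X :: "nat \<Rightarrow> 'a \<Rightarrow> real"
  assumes k: "1 \<le> k" "2 * k < n" and D: "Delta X n k \<omega> > 2 * s"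
  shows "\<exists>S. S \<subseteq> {..<n} \<and> card S = k \<and> (\<forall>i\<in>S. s < \<bar>X i \<omega> - \<mu>\<bar>)"
proof -
  define xs where "xs = map (\<lambda>i. X i \<omega>) [0..<n]"
  define ys where "ys = sort xs"
  define P where "P = (\<lambda>x::real. s < \<bar>x - \<mu>\<bar>)"
  have len: "length ys = n" by (simp add: ys_def xs_def)
  have sorted: "sorted ys" by (simp add: ys_def)
  have D': "ys ! (n - k) - ys ! (k - 1) > 2 * s"
    using D k by (simp add: Delta_def order_stat_def ys_def xs_def)
  have "k \<le> card {j. j < length ys \<and> P (ys ! j)}"
  proof (cases "ys ! (k - 1) < \<mu> - s")
    case True
    have "{..<k} \<subseteq> {j. j < length ys \<and> P (ys ! j)}"
    proof
      fix j assume "j \<in> {..<k}"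
      then have "ys ! j \<le> ys ! (k - 1)" "j < n" using sorted_nth_mono[OF sorted, of j "k - 1"] k len by auto
      then show "j \<in> {j. j < length ys \<and> P (ys ! j)}" using True len by (auto simp: P_def)
    qed
    then show ?thesis using card_mono[of "{j. j < length ys \<and> P (ys ! j)}" "{..<k}"] by auto
  next
    case False
    have "{n-k..<n} \<subseteq> {j. j < length ys \<and> P (ys ! j)}"
    proof
      fix j assume "j \<in> {n-k..<n}"
      then have "ys ! (n - k) \<le> ys ! j" "j < n" using sorted_nth_mono[OF sorted, of "n - k" j] k len by auto
      then show "j \<in> {j. j < length ys \<and> P (ys ! j)}" using False D' len by (auto simp: P_def)
    qed
    then show ?thesis using card_mono[of "{j. j < length ys \<and> P (ys ! j)}" "{n-k..<n}"] k by auto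
  qed
  also have "\<dots> = length (filter P ys)" by (rule length_filter_conv_card[symmetric])
  also have "\<dots> = length (filter P xs)"
    by (metis mset_filter mset_sort size_mset ys_def)
  also have "\<dots> = card {i. i < n \<and> P (X i \<omega>)}"
    unfolding length_filter_conv_card xs_def by (rule arg_cong[where f=card]) auto
  finally obtain S where "S \<subseteq> {i. i < n \<and> P (X i \<omega>)}" "card S = k"
    by (meson obtain_subset_with_card_n)
  then show ?thesis by (auto simp: P_def)
qed


theorem corollary4p6:
  fixes M :: "'a measure" and X :: "nat \<Rightarrow> 'a \<Rightarrow> real" and F :: "real measure"
    and n k :: nat and v :: real
  assumes "prob_space M"
    and "\<And>i. i < n \<Longrightarrow> X i \<in> borel_measurable M"
    and indep: "prob_space.indep_vars M (\<lambda>_. borel) X {..<n}"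
    and ident: "\<And>i. i < n \<Longrightarrow> distr M borel (X i) = F"
    and finvar: "integrable F (\<lambda>x. x\<^sup>2)"
    and k: "1 \<le> k" "2 * k < n"
    and v: "v > 0"
    and rho: "exp 1 / 6 * rho2 F (1 / (36 * v\<^sup>2) * (real k / real n)) \<le> v"
  shows "measure M {\<omega> \<in> space M.
           Delta X n k \<omega> > 12 * v * dist_sd F * sqrt (real n / real k)} \<le> exp (- real k)"
proof -
  interpret M: prob_space M by fact
  have n0: "0 < n" using k by auto
  have Fd: "F = distr M borel (X 0)" using ident[OF n0] by simp
  have [measurable]: "X 0 \<in> borel_measurable M" using assms(2)[OF n0] .
  interpret F: prob_space F unfolding Fd by (rule M.prob_space_distr) simp
  have setsF: "sets F = sets borel" unfolding Fd by simp
  have spF: "space F = UNIV" using sets_eq_imp_space_eq[OF setsF] by simp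
  have measF: "f \<in> borel_measurable F \<longleftrightarrow> f \<in> borel_measurable borel" for f :: "real \<Rightarrow> real"
    by (rule measurable_cong_sets[OF setsF refl, THEN set_eq_iff[THEN iffD1], rule_format])
  define \<mu> where "\<mu> = dist_mean F"
  define \<sigma> where "\<sigma> = dist_sd F"
  define s where "s = 6 * v * \<sigma> * sqrt (real n / real k)"
  define A where "A = {x::real. s < \<bar>x - \<mu>\<bar>}"
  define p where "p = measure F A"
  have Ameas: "A \<in> sets borel" unfolding A_def by measurable
  have AF: "A \<in> sets F" using Ameas setsF by simp
  have intx: "integrable F (\<lambda>x. x)"
    by (rule F.square_integrable_imp_integrable) (use finvar measF in auto)
  have intv: "integrable F (\<lambda>x. (x - \<mu>)\<^sup>2)"
    using finvar intx by (simp add: power2_diff)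
  have var: "(\<integral>x. (x - \<mu>)\<^sup>2 \<partial>F) = \<sigma>\<^sup>2"
    unfolding \<sigma>_def dist_sd_def \<mu>_def by (simp add: integral_nonneg_AE)
  have sig0: "\<sigma> \<ge> 0" unfolding \<sigma>_def dist_sd_def by (simp add: integral_nonneg_AE)
  have p0: "0 \<le> p" unfolding p_def by simp
  have key: "real n * p \<le> real k / (exp 1)\<^sup>2"
  proof (cases "\<sigma> = 0")
    case True
    then have "(\<integral>x. (x - \<mu>)\<^sup>2 \<partial>F) = 0" using var by simp
    then have "AE x in F. (x - \<mu>)\<^sup>2 = 0"
      using integral_nonneg_eq_0_iff_AE[OF intv] by simp
    then have "AE x in F. x \<notin> A"
      by eventually_elim (simp add: A_def s_def True)
    then have "p = 0" unfolding p_def using F.prob_eq_0[OF AF] by simp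
    then show ?thesis by simp
  next
    case False
    then have sp: "\<sigma> > 0" using sig0 by simp
    have spos: "s > 0" unfolding s_def using sp v k by auto
    define \<xi> where "\<xi> = 1 / (36 * v\<^sup>2) * (real k / real n)"
    have s2: "s\<^sup>2 = 36 * v\<^sup>2 * \<sigma>\<^sup>2 * (real n / real k)"
      unfolding s_def using k by (simp add: power_mult_distrib)
    have cheb: "p \<le> \<xi>"
    proof -
      have "p \<le> F.prob {x \<in> space F. \<bar>x - F.expectation (\<lambda>x. x)\<bar> \<ge> s}"
        unfolding p_def A_def \<mu>_def dist_mean_def
      proof (rule F.finite_measure_mono)
        have "{x. s \<le> \<bar>x - F.expectation (\<lambda>x. x)\<bar>} \<in> sets borel" by measurable
        then show "{x \<in> space F. s \<le> \<bar>x - F.expectation (\<lambda>x. x)\<bar>} \<in> F.events"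
          using setsF spF by simp
      qed (auto simp: spF)
      also have "\<dots> \<le> F.variance (\<lambda>x. x) / s\<^sup>2"
        by (rule F.Chebyshev_inequality) (use finvar spos measF in auto)
      also have "\<dots> = \<sigma>\<^sup>2 / s\<^sup>2" using var unfolding \<mu>_def dist_mean_def by simp
      also have "\<dots> = \<xi>" unfolding s2 \<xi>_def using sp v k by (simp add: field_simps)
      finally show ?thesis .
    qed
    define g where "g = (\<lambda>x::real. (x, indicator A x :: real))"
    have gm[measurable]: "g \<in> borel_measurable borel" unfolding g_def using Ameas by measurable
    define N where "N = distr F borel g"
    have [measurable]: "(\<lambda>p::real\<times>real. (fst p - \<mu>)\<^sup>2 * snd p) \<in> borel_measurable borel"
      "(\<lambda>p::real\<times>real. \<bar>fst p - \<mu>\<bar>\<^sup>2 * snd p) \<in> borel_measurable borel"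
      "(\<lambda>p::real\<times>real. snd p) \<in> borel_measurable borel"
      "(\<lambda>p::real\<times>real. fst p) \<in> borel_measurable borel"
      by (intro borel_measurable_continuous_onI continuous_intros)+
    let ?S = "{ sqrt (\<integral>p. \<bar>fst p - dist_mean F\<bar>\<^sup>2 * snd p \<partial>N) / dist_sd F | N.
             prob_space N \<and> sets N = sets (borel :: (real \<times> real) measure) \<and>
             distr N borel fst = F \<and>
             (AE p in N. 0 \<le> snd p \<and> snd p \<le> 1) \<and>
             (\<integral>p. snd p \<partial>N) \<le> \<xi> }"
    have rhoeq: "rho2 F \<xi> = Sup ?S" unfolding rho2_def using False \<sigma>_def by simp
    have gF: "g \<in> measurable F borel" by (subst measurable_cong_sets[OF setsF refl]) (rule gm)
    have intN: "(\<integral>p. \<bar>fst p - \<mu>\<bar>\<^sup>2 * snd p \<partial>N) = (\<integral>x. (x - \<mu>)\<^sup>2 * indicator A x \<partial>F)"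
      unfolding N_def by (subst integral_distr[OF gF]) (auto simp: g_def)
    have memb: "sqrt (\<integral>p. \<bar>fst p - \<mu>\<bar>\<^sup>2 * snd p \<partial>N) / \<sigma> \<in> ?S"
    proof -
      have "prob_space N" unfolding N_def by (rule F.prob_space_distr[OF gF])
      moreover have "sets N = sets (borel :: (real \<times> real) measure)" unfolding N_def by simp
      moreover have "distr N borel fst = F"
        unfolding N_def
        using gF by (subst distr_distr) (auto simp: comp_def g_def distr_id2[OF setsF[symmetric]])
      moreover have "AE p in N. 0 \<le> snd p \<and> snd p \<le> 1"
        unfolding N_def by (subst AE_distr_iff[OF gF]) (auto simp: g_def indicator_def)
      moreover have "(\<integral>p. snd p \<partial>N) \<le> \<xi>"
        unfolding N_def using cheb by (subst integral_distr[OF gF]) (auto simp: g_def p_def AF)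
      ultimately show ?thesis unfolding \<mu>_def \<sigma>_def by blast
    qed
    have bdd: "bdd_above ?S"
    proof (rule bdd_aboveI[where M=1])
      fix x assume "x \<in> ?S"
      then obtain N' :: "(real \<times> real) measure" where
        N': "prob_space N'" "sets N' = sets (borel :: (real \<times> real) measure)"
        "distr N' borel fst = F" "AE p in N'. 0 \<le> snd p \<and> snd p \<le> 1"
        and xe: "x = sqrt (\<integral>p. \<bar>fst p - dist_mean F\<bar>\<^sup>2 * snd p \<partial>N') / dist_sd F"
        by blast
      have fm: "fst \<in> measurable N' borel"
        by (subst measurable_cong_sets[OF N'(2) refl]) simp
      have i1: "integrable N' (\<lambda>p. (fst p - \<mu>)\<^sup>2)"
        using intv N'(3) integrable_distr_eq[OF fm, of "\<lambda>x. (x - \<mu>)\<^sup>2"] by simp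
      have "(\<integral>p. \<bar>fst p - dist_mean F\<bar>\<^sup>2 * snd p \<partial>N') \<le> (\<integral>p. (fst p - \<mu>)\<^sup>2 \<partial>N')"
        using N'(4) by (intro integral_mono_AE'[OF i1]) (auto simp: \<mu>_def elim!: AE_mp intro!: mult_left_le)
      also have "\<dots> = \<sigma>\<^sup>2"
        using var N'(3) integral_distr[OF fm, of "\<lambda>x. (x - \<mu>)\<^sup>2"] by simp
      finally have "sqrt (\<integral>p. \<bar>fst p - dist_mean F\<bar>\<^sup>2 * snd p \<partial>N') \<le> sqrt (\<sigma>\<^sup>2)"
        by (rule real_sqrt_le_mono)
      then show "x \<le> 1"
        using sp sig0 unfolding xe \<sigma>_def by (simp add: divide_le_eq)
    qed
    have low: "s\<^sup>2 * p \<le> (\<integral>x. (x - \<mu>)\<^sup>2 * indicator A x \<partial>F)"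
    proof -
      have "s\<^sup>2 * p = (\<integral>x. s\<^sup>2 * indicator A x \<partial>F)" unfolding p_def using AF by simp
      also have "\<dots> \<le> (\<integral>x. (x - \<mu>)\<^sup>2 * indicator A x \<partial>F)"
      proof (rule integral_mono)
        show "integrable F (\<lambda>x. s\<^sup>2 * indicator A x)"
          using AF by (intro integrable_mult_right integrable_real_indicator) (auto simp: F.emeasure_eq_measure)
        show "integrable F (\<lambda>x. (x - \<mu>)\<^sup>2 * indicator A x)"
          by (rule integrable_real_mult_indicator[OF AF intv])
        fix x show "s\<^sup>2 * indicator A x \<le> (x - \<mu>)\<^sup>2 * indicator A x"
          using spos by (auto simp: indicator_def A_def abs_le_square_iff[symmetric] intro: order.strict_implies_order)
      qed
      finally show ?thesis .
    qed
    have "s * sqrt p / \<sigma> \<le> rho2 F \<xi>"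
    proof -
      have "s * sqrt p = sqrt (s\<^sup>2 * p)" using spos by (simp add: real_sqrt_mult)
      also have "\<dots> \<le> sqrt (\<integral>p. \<bar>fst p - \<mu>\<bar>\<^sup>2 * snd p \<partial>N)"
        using low intN by simp
      finally have "s * sqrt p / \<sigma> \<le> sqrt (\<integral>p. \<bar>fst p - \<mu>\<bar>\<^sup>2 * snd p \<partial>N) / \<sigma>"
        using sp by (simp add: divide_right_mono)
      also have "\<dots> \<le> Sup ?S" by (rule cSup_upper[OF memb bdd])
      finally show ?thesis using rhoeq by simp
    qed
    then have "exp 1 / 6 * (s * sqrt p / \<sigma>) \<le> v"
      using rho \<xi>_def by (smt (verit) exp_gt_zero mult_left_mono divide_nonneg_pos)
    then have "exp 1 * v * sqrt (real n / real k) * sqrt p \<le> v"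
      unfolding s_def using sp by (simp add: field_simps)
    then have "exp 1 * sqrt (real n / real k) * sqrt p \<le> 1"
      using v by (simp add: mult.commute mult.left_commute)
    then have "(exp 1 * sqrt (real n / real k) * sqrt p)\<^sup>2 \<le> 1"
      by (intro power_le_one) (auto simp: p0)
    then have "(exp 1)\<^sup>2 * (real n / real k) * p \<le> 1"
      using p0 by (simp add: power_mult_distrib)
    then show ?thesis using k by (simp add: field_simps)
  qed
  define E where "E i = X i -` A \<inter> space M" for i
  define SS where "SS = {S. S \<subseteq> {..<n} \<and> card S = k}"
  have Emeas: "E i \<in> M.events" if "i < n" for i
    unfolding E_def using measurable_sets[OF assms(2)[OF that] Ameas] .
  have probE: "M.prob (E i) = p" if "i < n" for i
    unfolding p_def E_def ident[OF that, symmetric]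
    by (rule measure_distr[symmetric]) (use assms(2)[OF that] Ameas in auto)
  have finSS: "finite SS" unfolding SS_def
    by (rule finite_subset[of _ "Pow {..<n}"]) auto
  have SSne: "S \<noteq> {}" "finite S" "S \<subseteq> {..<n}" if "S \<in> SS" for S
    using that k unfolding SS_def by (auto intro: finite_subset)
  have INTmeas: "(\<Inter>i\<in>S. E i) \<in> M.events" if "S \<in> SS" for S
    using SSne[OF that] Emeas by (intro sets.finite_INT) auto
  have sub: "{\<omega> \<in> space M. Delta X n k \<omega> > 12 * v * dist_sd F * sqrt (real n / real k)}
      \<subseteq> (\<Union>S\<in>SS. \<Inter>i\<in>S. E i)"
  proof
    fix \<omega> assume "\<omega> \<in> {\<omega> \<in> space M. Delta X n k \<omega> > 12 * v * dist_sd F * sqrt (real n / real k)}"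
    then have om: "\<omega> \<in> space M" and D: "Delta X n k \<omega> > 2 * s"
      unfolding s_def \<sigma>_def by auto
    obtain S where S: "S \<subseteq> {..<n}" "card S = k" "\<forall>i\<in>S. s < \<bar>X i \<omega> - \<mu>\<bar>"
      using many_far[OF k D, of \<mu>] by blast
    then have "S \<in> SS" unfolding SS_def by auto
    moreover have "\<omega> \<in> (\<Inter>i\<in>S. E i)" using S om unfolding E_def A_def by auto
    ultimately show "\<omega> \<in> (\<Union>S\<in>SS. \<Inter>i\<in>S. E i)" by blast
  qed
  have indsets: "M.indep_sets (\<lambda>i. sigma_sets (space M) { X i -` B \<inter> space M | B. B \<in> sets borel}) {..<n}"
    using indep unfolding M.indep_vars_def by simp
  have probINT: "M.prob (\<Inter>i\<in>S. E i) = p ^ k" if "S \<in> SS" for S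
  proof -
    have "M.prob (\<Inter>i\<in>S. E i) = (\<Prod>i\<in>S. M.prob (E i))"
      using SSne[OF that]
      by (intro M.indep_setsD[OF indsets]) (auto simp: E_def intro!: sigma_sets.Basic Ameas)
    also have "\<dots> = (\<Prod>i\<in>S. p)" using SSne[OF that] probE by (intro prod.cong) auto
    also have "\<dots> = p ^ k" using that unfolding SS_def by simp
    finally show ?thesis .
  qed
  have cardSS: "card SS = n choose k" unfolding SS_def using n_subsets[of "{..<n}" k] by simp
  have "measure M {\<omega> \<in> space M. Delta X n k \<omega> > 12 * v * dist_sd F * sqrt (real n / real k)}
      \<le> M.prob (\<Union>S\<in>SS. \<Inter>i\<in>S. E i)"
    using sub INTmeas finSS by (intro M.finite_measure_mono) auto
  also have "\<dots> \<le> (\<Sum>S\<in>SS. M.prob (\<Inter>i\<in>S. E i))"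
    using INTmeas finSS by (intro M.finite_measure_subadditive_finite) auto
  also have "\<dots> = (\<Sum>S\<in>SS. p ^ k)" using probINT by (intro sum.cong) auto
  also have "\<dots> = real (n choose k) * p ^ k" using cardSS by simp
  also have "\<dots> \<le> (real n ^ k / fact k) * p ^ k"
  proof (intro mult_right_mono)
    have "real (n choose k) * fact k \<le> real n ^ k"
      using binomial_fact_pow[of n k] by (metis of_nat_fact of_nat_le_iff of_nat_mult of_nat_power)
    then show "real (n choose k) \<le> real n ^ k / fact k" by (simp add: field_simps)
  qed (simp add: p0)
  also have "\<dots> = (real n * p) ^ k / fact k" by (simp add: power_mult_distrib)
  also have "\<dots> \<le> (real k / (exp 1)\<^sup>2) ^ k / fact k"
    using key p0 by (intro divide_right_mono power_mono) auto
  also have "\<dots> = (real k ^ k / fact k) / exp (2 * real k)"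
    by (simp add: power_divide power_mult[symmetric] exp_of_nat_mult[symmetric] mult.commute)
  also have "\<dots> \<le> exp (real k) / exp (2 * real k)"
    using pow_div_fact_le_exp[of k] by (intro divide_right_mono) auto
  also have "\<dots> = exp (- real k)" by (simp add: exp_diff[symmetric])
  finally show ?thesis .
qed

end
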